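(* Let $q$ be an odd prime power, $P\in\mathbb{F}_q[T]$ monic irreducible and $\nu\ge1$. (1) If $\chi_q(P)=-1$, then $\#\mathcal{A}_q(P^\nu)=|P|^\nu\big(1-\frac{1}{|P|+1}\big)+\frac{|P|}{|P|+1}$ when $\nu$ is odd and $=|P|^\nu\big(1-\frac{1}{|P|+1}\big)+\frac{1}{|P|+1}$ when $\nu$ is even. (2) If $\chi_q(P)=0$, then $\#\mathcal{A}_q(P^\nu)=\frac{|P|^\nu+1}{2}$. (3) If $\chi_q(P)=1$, then $\#\mathcal{A}_q(P^\nu)=|P|^\nu$.
   Context: $|P|=q^{\deg P}$. $\chi_q(f)=0$ if $f(0)=0$, $1$ if $f(0)$ is a nonzero square in $\mathbb{F}_q$, $-1$ otherwise. $\mathcal{A}_q(P^\nu)=\{A^2+TB^2\bmod P^\nu:A,B\in\mathbb{F}_q[T]\}\subseteq\mathbb{F}_q[T]/(P^\nu)$. *)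

theory Defs
  imports "HOL-Computational_Algebra.Polynomial_Factorial" "HOL-Library.Cardinality"
begin

definition pnorm :: "'a::{field,finite} poly \<Rightarrow> nat" where
  "pnorm P = CARD('a) ^ degree P"

definition chiq :: "'a::field poly \<Rightarrow> int" where
  "chiq f = (if poly f 0 = 0 then 0
             else if (\<exists>x. x ^ 2 = poly f 0) then 1 else -1)"

text \<open>A_q(P^nu), residue classes mod P^nu represented by their canonical remainders.\<close>
definition Aq :: "'a::field poly \<Rightarrow> nat \<Rightarrow> 'a poly set" where
  "Aq P \<nu> = {(A ^ 2 + [:0, 1:] * B ^ 2) mod (P ^ \<nu>) | A B. True}"

end

theory Submission
  imports Defs "HOL-Algebra.Algebraic_Closure_Type"
begin

hide_const (open) Divisibility.irreducible Divisibility.prime up_ring.coeff up_ring.monom Polynomials.degree Polynomials.lead_coeff module.smult Coset.order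

lemma ff_pow_card:
  fixes x :: "'a::{field,finite}"
  shows "x ^ CARD('a) = x"
proof (cases "x = 0")
  case False
  have "x * (\<Prod>y\<in>UNIV-{0}. x * y) = x * x ^ (CARD('a) - 1) * \<Prod>(UNIV-{0})"
    by (simp add: prod.distrib mult_ac)
  also have "x * x ^ (CARD('a) - 1) = x ^ Suc (CARD('a) - 1)"
    by (subst power_Suc) auto
  also have "Suc (CARD('a) - 1) = CARD('a)"
    using finite_UNIV_card_ge_0[where ?'a = 'a] by simp
  also have "(\<Prod>y\<in>UNIV-{0}. x * y) = (\<Prod>y\<in>UNIV-{0}. y)"
    by (rule prod.reindex_bij_witness[of _ "\<lambda>y. y / x" "\<lambda>y. x * y"]) (use False in auto)
  finally show ?thesis
    by simp
qed (use finite_UNIV_card_ge_0[where ?'a = 'a] in auto)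

lemma ff_char_prime: "prime CHAR('a::{field,finite})"
  by (simp add: finite_imp_CHAR_pos prime_CHAR_semidom)

lemma of_nat_mem_closed:
  fixes H :: "'a::comm_ring_1 set"
  assumes "0 \<in> H" "\<And>a b. a \<in> H \<Longrightarrow> b \<in> H \<Longrightarrow> a + b \<in> H" "h \<in> H"
  shows "of_nat n * h \<in> H"
  by (induction n) (auto simp: assms distrib_right)

definition addclosed :: "'a::comm_ring_1 set \<Rightarrow> bool" where
  "addclosed H \<longleftrightarrow> 0 \<in> H \<and> (\<forall>a\<in>H. \<forall>b\<in>H. a + b \<in> H)"

lemma of_nat_mod_CHAR: "(of_nat (n mod CHAR('a)) :: 'a::comm_ring_1) = of_nat n"
proof -
  have "n = n mod CHAR('a) + CHAR('a) * (n div CHAR('a))" by simp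
  hence "(of_nat n :: 'a) = of_nat (n mod CHAR('a)) + of_nat CHAR('a) * of_nat (n div CHAR('a))"
    by (metis of_nat_add of_nat_mult)
  thus ?thesis by simp
qed

lemma addclosed_extend:
  fixes H :: "'a::{field,finite} set"
  assumes H: "addclosed H" and x: "x \<notin> H"
  shows "\<exists>H'::'a set. addclosed H' \<and> card H' = CHAR('a) * card H"
proof -
  define p where "p = CHAR('a)"
  have pp: "prime p" unfolding p_def by (rule ff_char_prime)
  have H0: "0 \<in> H" and Hadd: "\<And>a b. a \<in> H \<Longrightarrow> b \<in> H \<Longrightarrow> a + b \<in> H"
    using H by (auto simp: addclosed_def)
  have Hmul: "h \<in> H \<Longrightarrow> of_nat n * h \<in> H" for h n
    using of_nat_mem_closed[OF H0 Hadd] by blast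
  have Hneg: "h \<in> H \<Longrightarrow> - h \<in> H" for h
  proof -
    assume h: "h \<in> H"
    have "p \<ge> 1" using pp prime_ge_1_nat by blast
    have "(of_nat (p - 1) :: 'a) = of_nat p - 1" using \<open>p \<ge> 1\<close> by (simp add: of_nat_diff)
    hence "(of_nat (p - 1) :: 'a) = - 1" by (simp add: p_def)
    with Hmul[OF h, of "p - 1"] show ?thesis by simp
  qed
  define f where "f = (\<lambda>(j::nat, h). h + of_nat j * x)"
  define H' where "H' = f ` ({..<p} \<times> H)"
  have inj: "inj_on f ({..<p} \<times> H)"
  proof (rule inj_onI)
    fix z1 z2 assume z: "z1 \<in> {..<p} \<times> H" "z2 \<in> {..<p} \<times> H" "f z1 = f z2"
    obtain j1 h1 j2 h2 where zz: "z1 = (j1, h1)" "z2 = (j2, h2)" by (cases z1, cases z2) auto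
    have a: "j1 \<in> {..<p}" "h1 \<in> H" "j2 \<in> {..<p}" "h2 \<in> H" "f (j1, h1) = f (j2, h2)"
      using z zz by auto
    have key: "j1 = j2" if "j1 < j2" "j2 < p" "h1 \<in> H" "h2 \<in> H" "h1 + of_nat j1 * x = h2 + of_nat j2 * x"
      for j1 j2 h1 h2
    proof (rule ccontr)
      define c where "c = j2 - j1"
      have c: "0 < c" "c < p" using that by (auto simp: c_def)
      have "of_nat c * x = h1 - h2" using that(1,5) by (simp add: c_def of_nat_diff algebra_simps)
      hence cH: "of_nat c * x \<in> H" using Hadd[OF that(3) Hneg[OF that(4)]] by simp
      have "coprime c p"
        using c pp by (metis coprime_commute less_not_refl2 nat_dvd_not_less prime_imp_coprime)
      hence g: "gcd c p = 1" by simp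
      obtain u v where uv: "c * u = p * v + gcd c p" using bezout_nat[of c p] c by auto
      hence "(of_nat (c * u) :: 'a) = of_nat (p * v) + 1" using g by simp
      hence "(of_nat (c * u) :: 'a) = 1" by (simp add: p_def)
      hence "x = of_nat u * (of_nat c * x)" by (metis mult.assoc mult.commute mult_1 of_nat_mult)
      with Hmul[OF cH, of u] x show False by simp
    qed
    from a have eq: "h1 + of_nat j1 * x = h2 + of_nat j2 * x" by (simp add: f_def)
    have "j1 = j2"
    proof (cases j1 j2 rule: linorder_cases)
      case less thus ?thesis using key[of j1 j2 h1 h2] a eq by auto
    next
      case greater thus ?thesis using key[of j2 j1 h2 h1] a eq by auto
    qed
    with eq show "z1 = z2" by (simp add: zz)
  qed
  have "card H' = p * card H"
    unfolding H'_def using card_image[OF inj] by (simp add: card_cartesian_product)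
  moreover have "addclosed H'"
    unfolding addclosed_def
  proof (intro conjI ballI)
    have "p > 0" using pp prime_gt_0_nat by blast
    thus "0 \<in> H'" unfolding H'_def f_def using H0 by (auto intro!: image_eqI[where x="(0, 0)"])
  next
    fix a b assume "a \<in> H'" "b \<in> H'"
    then obtain j1 h1 j2 h2 where ab: "j1 < p" "h1 \<in> H" "j2 < p" "h2 \<in> H"
      "a = h1 + of_nat j1 * x" "b = h2 + of_nat j2 * x"
      unfolding H'_def f_def by auto
    have p0: "p > 0" using pp prime_gt_0_nat by blast
    have "a + b = (h1 + h2) + of_nat ((j1 + j2) mod p) * x"
      using ab of_nat_mod_CHAR[of "j1 + j2", where 'a='a] by (simp add: p_def algebra_simps)
    moreover have "(j1 + j2) mod p < p" using p0 by simp
    ultimately show "a + b \<in> H'" unfolding H'_def f_def using Hadd[OF ab(2,4)]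
      by (auto intro!: image_eqI[where x="((j1 + j2) mod p, h1 + h2)"])
  qed
  ultimately have "addclosed H' \<and> card H' = CHAR('a) * card H" by (simp add: p_def)
  thus ?thesis by blast
qed

lemma ff_card_prime_power: "\<exists>m. CARD('a::{field,finite}) = CHAR('a) ^ m"
proof -
  define p where "p = CHAR('a)"
  have pp: "prime p" unfolding p_def by (rule ff_char_prime)
  have main: "(\<exists>m. CARD('a) = p ^ m) \<or> (\<exists>H::'a set. addclosed H \<and> card H = p ^ k)" for k
  proof (induction k)
    case 0
    have "addclosed {0::'a}" by (simp add: addclosed_def)
    thus ?case by (intro disjI2 exI[of _ "{0::'a}"]) auto
  next
    case (Suc k)
    show ?case
    proof (cases "\<exists>m. CARD('a) = p ^ m")
      case False
      with Suc obtain H :: "'a set" where H: "addclosed H" "card H = p ^ k" by blast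
      show ?thesis
      proof (cases "H = UNIV")
        case True thus ?thesis using H by auto
      next
        case False
        then obtain x where "x \<notin> H" by blast
        from addclosed_extend[OF H(1) this] H(2) show ?thesis by (auto simp: p_def)
      qed
    qed auto
  qed
  show ?thesis
  proof (rule ccontr)
    assume nc: "\<not> ?thesis"
    from main[of "CARD('a)"] nc obtain H :: "'a set" where H: "card H = p ^ CARD('a)"
      by (auto simp: p_def)
    have "card H \<le> CARD('a)" by (rule card_mono) auto
    moreover have "CARD('a) < 2 ^ CARD('a)" by (rule less_exp)
    moreover have "(2::nat) ^ CARD('a) \<le> p ^ CARD('a)"
      using pp prime_ge_2_nat power_mono by blast
    ultimately show False using H by linarith
  qed
qed

lemma frob_add:
  fixes x y :: "'a::{field,finite} alg_closure"
  shows "(x + y) ^ CARD('a) = x ^ CARD('a) + y ^ CARD('a)"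
proof -
  obtain m where m: "CARD('a) = CHAR('a) ^ m" using ff_card_prime_power by blast
  show ?thesis
    by (rule freshmans_dream'[where n=m]) (simp_all add: m ff_char_prime)
qed

lemma frob_sum:
  fixes f :: "'b \<Rightarrow> 'a::{field,finite} alg_closure"
  shows "(sum f A) ^ CARD('a) = (\<Sum>i\<in>A. f i ^ CARD('a))"
proof -
  obtain m where m: "CARD('a) = CHAR('a) ^ m" using ff_card_prime_power by blast
  show ?thesis
    by (rule freshmans_dream_sum'[where n=m]) (simp_all add: m ff_char_prime)
qed


lemma euler_gen:
  fixes E :: "'b::field set"
  assumes fin: "finite E" and E0: "0 \<in> E" and mul: "\<And>x y. x\<in>E \<Longrightarrow> y\<in>E \<Longrightarrow> x*y \<in> E"
    and cE: "card E = Suc n" and ev: "even n" and n0: "n > 0"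
    and ferm: "\<And>x. x \<in> E \<Longrightarrow> x \<noteq> 0 \<Longrightarrow> x ^ n = 1"
  shows "(\<lambda>y. y^2) ` (E - {0}) = {x \<in> E - {0}. x ^ (n div 2) = 1}"
    and "card ((\<lambda>y. y^2) ` (E - {0})) = n div 2"
proof -
  define SQ where "SQ = (\<lambda>y. y^2) ` (E - {0})"
  define R where "R = {x \<in> E - {0}. x ^ (n div 2) = 1}"
  have n2: "2 * (n div 2) = n" using ev by simp
  have sub: "SQ \<subseteq> R"
  proof
    fix s assume "s \<in> SQ"
    then obtain y where y: "y \<in> E" "y \<noteq> 0" "s = y^2" unfolding SQ_def by auto
    have "s \<in> E" using mul[OF y(1) y(1)] y(3) by (simp add: power2_eq_square)
    moreover have "s ^ (n div 2) = 1" using y ferm[OF y(1,2)] n2 by (simp flip: power_mult)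
    ultimately show "s \<in> R" using y unfolding R_def by auto
  qed
  have finR: "finite R" using fin unfolding R_def by auto
  define k where "k = n div 2"
  have k0: "k > 0" using n0 ev unfolding k_def by auto
  define pk where "pk = (monom 1 k + [:-1:] :: 'b poly)"
  have pkpoly: "poly pk x = x ^ k - 1" for x unfolding pk_def by (simp add: poly_monom)
  have degpk: "degree pk = k" unfolding pk_def using k0
    by (subst degree_add_eq_left) (simp_all add: degree_monom_eq)
  have pk0: "pk \<noteq> 0" using degpk k0 by auto
  have Rsub: "R \<subseteq> {x. poly pk x = 0}" unfolding R_def k_def[symmetric] by (auto simp: pkpoly)
  have "card R \<le> card {x. poly pk x = 0}"
    by (rule card_mono[OF poly_roots_finite[OF pk0] Rsub])
  also have "\<dots> \<le> degree pk" by (rule card_poly_roots_bound[OF pk0])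
  finally have cR: "card R \<le> k" using degpk by simp
  have cfib: "finite {y. y^2 = s} \<and> card {y. y^2 = s} \<le> 2" for s :: 'b
  proof -
    define ps where "ps = [:-s, 0, 1:]"
    have ps0: "ps \<noteq> 0" unfolding ps_def by simp
    moreover have "degree ps = 2" unfolding ps_def by simp
    moreover have eq: "{y. y^2 = s} = {y. poly ps y = 0}" unfolding ps_def
      by (auto simp: power2_eq_square algebra_simps)
    ultimately show ?thesis using card_poly_roots_bound[OF ps0] poly_roots_finite[OF ps0] by simp
  qed
  have "E - {0} \<subseteq> (\<Union>s\<in>SQ. {y. y^2 = s})" unfolding SQ_def by auto
  moreover have "finite SQ" unfolding SQ_def using fin by simp
  ultimately have "card (E - {0}) \<le> card (\<Union>s\<in>SQ. {y. y^2 = s})"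
    using cfib by (intro card_mono) auto
  also have "\<dots> \<le> (\<Sum>s\<in>SQ. card {y. y^2 = s})" by (rule card_UN_le) (simp add: SQ_def fin)
  also have "\<dots> \<le> (\<Sum>s\<in>SQ. 2)" using cfib by (intro sum_mono) auto
  finally have "n \<le> 2 * card SQ" using cE fin E0 by simp
  hence "k \<le> card SQ" unfolding k_def by simp
  moreover have "card SQ \<le> card R" using sub finR by (rule card_mono[rotated])
  ultimately have "card SQ = card R" using cR by simp
  hence "SQ = R" using sub finR by (metis card_subset_eq)
  thus "(\<lambda>y. y^2) ` (E - {0}) = {x \<in> E - {0}. x ^ (n div 2) = 1}" unfolding SQ_def R_def .
  show "card ((\<lambda>y. y^2) ` (E - {0})) = n div 2"
    using \<open>card SQ = card R\<close> \<open>k \<le> card SQ\<close> cR unfolding SQ_def k_def by simp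
qed

definition Dn :: "nat \<Rightarrow> 'a::zero poly set" where "Dn n = {f. \<forall>i\<ge>n. coeff f i = 0}"

lemma Dn_iff: "f \<in> Dn n \<longleftrightarrow> f = 0 \<or> degree f < n"
proof
  assume "f \<in> Dn n"
  hence h: "\<forall>i\<ge>n. coeff f i = 0" by (simp add: Dn_def)
  show "f = 0 \<or> degree f < n"
  proof (rule ccontr)
    assume "\<not> (f = 0 \<or> degree f < n)"
    hence "f \<noteq> 0" "degree f \<ge> n" by auto
    with h show False by auto
  qed
next
  assume "f = 0 \<or> degree f < n"
  thus "f \<in> Dn n" by (auto simp: Dn_def coeff_eq_0)
qed

definition pc :: "'a::zero \<times> 'a poly \<Rightarrow> 'a poly" where "pc z = pCons (fst z) (snd z)"

lemma Dn_Suc: "Dn (Suc n) = pc ` (UNIV \<times> Dn n)"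
proof (intro equalityI subsetI)
  fix f :: "'a poly" assume f: "f \<in> Dn (Suc n)"
  obtain a g where fg: "f = pCons a g" by (cases f) auto
  have "g \<in> Dn n" using f unfolding Dn_def fg by (auto simp: coeff_pCons split: nat.splits)
  hence "(a, g) \<in> UNIV \<times> Dn n" by simp
  moreover have "f = pc (a, g)" by (simp add: pc_def fg)
  ultimately show "f \<in> pc ` (UNIV \<times> Dn n)" by blast
next
  fix f :: "'a poly" assume "f \<in> pc ` (UNIV \<times> Dn n)"
  then obtain a g where "f = pCons a g" "g \<in> Dn n" by (auto simp: pc_def)
  thus "f \<in> Dn (Suc n)" unfolding Dn_def by (auto simp: coeff_pCons split: nat.splits)
qed

lemma Dn_0: "Dn 0 = {0}"
  by (auto simp: Dn_def poly_eq_iff)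

lemma inj_pc: "inj_on pc A"
proof (rule inj_onI)
  fix x y :: "'a::zero \<times> 'a poly"
  assume "pc x = pc y"
  thus "x = y" by (cases x, cases y) (simp add: pc_def)
qed

lemma poly_pc_0: "poly (pc z) 0 = fst z"
  by (simp add: pc_def)

lemma card_Dn: "finite (Dn n :: 'a::{zero,finite} poly set) \<and> card (Dn n :: 'a poly set) = CARD('a) ^ n"
proof (induction n)
  case 0 show ?case unfolding Dn_0 by simp
next
  case (Suc n)
  have fin: "finite ((UNIV :: 'a set) \<times> (Dn n :: 'a poly set))"
    by (rule finite_cartesian_product[OF finite_class.finite_UNIV]) (use Suc in simp)
  have "card (pc ` (UNIV \<times> (Dn n :: 'a poly set))) = card ((UNIV :: 'a set) \<times> (Dn n :: 'a poly set))"
    by (rule card_image[OF inj_pc])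
  also have "\<dots> = CARD('a) * CARD('a) ^ n" using Suc by (simp add: card_cartesian_product)
  finally show ?case unfolding Dn_Suc using fin by simp
qed

lemma mod_Dn_id: "M \<noteq> 0 \<Longrightarrow> f \<in> Dn (degree M) \<Longrightarrow> f mod (M::'a::field poly) = f"
  by (auto simp: Dn_iff mod_poly_less)

lemma mod_in_Dn: "M \<noteq> 0 \<Longrightarrow> f mod (M::'a::field poly) \<in> Dn (degree M)"
  using degree_mod_less[of M f] by (auto simp: Dn_iff)

lemma bezout_irr:
  fixes P x :: "'a::field poly"
  assumes P: "irreducible P" and nx: "\<not> P dvd x"
  shows "\<exists>a b. a * P + b * x = 1"
proof -
  define I where "I = {a * P + b * x | a b. True}"
  have xI: "x \<in> I" unfolding I_def by (rule CollectI, rule exI[of _ 0], rule exI[of _ 1]) simp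
  have x0: "x \<noteq> 0" using nx by auto
  have addI: "u \<in> I \<Longrightarrow> v \<in> I \<Longrightarrow> u - c * v \<in> I" for u v c
  proof -
    assume "u \<in> I" "v \<in> I"
    then obtain a1 b1 a2 b2 where "u = a1 * P + b1 * x" "v = a2 * P + b2 * x" unfolding I_def by auto
    hence "u - c * v = (a1 - c * a2) * P + (b1 - c * b2) * x" by (simp add: algebra_simps)
    thus ?thesis unfolding I_def by blast
  qed
  have PI: "P \<in> I" unfolding I_def by (rule CollectI, rule exI[of _ 1], rule exI[of _ 0]) simp
  define n0 where "n0 = (LEAST n. \<exists>g\<in>I. g \<noteq> 0 \<and> degree g = n)"
  have "\<exists>g\<in>I. g \<noteq> 0 \<and> degree g = n0"
    unfolding n0_def by (rule LeastI[of _ "degree x"]) (use xI x0 in blast)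
  then obtain g where g: "g \<in> I" "g \<noteq> 0" "degree g = n0" by blast
  have gmin: "h \<in> I \<Longrightarrow> h \<noteq> 0 \<Longrightarrow> n0 \<le> degree h" for h
    unfolding n0_def by (rule Least_le) blast
  have gdvd: "g dvd y" if "y \<in> I" for y
  proof -
    have "y mod g = y - (y div g) * g" by (simp add: minus_div_mult_eq_mod)
    hence "y mod g \<in> I" using addI[OF that g(1)] by simp
    moreover have "y mod g = 0 \<or> degree (y mod g) < degree g" using degree_mod_less[OF g(2)] by blast
    ultimately have "y mod g = 0" using gmin g(3) by fastforce
    thus ?thesis by (simp add: mod_eq_0_iff_dvd)
  qed
  have "g dvd P" using gdvd[OF PI] .
  then obtain h where Pgh: "P = g * h" by blast
  from Factorial_Ring.irreducibleD[OF P Pgh] have "is_unit g \<or> is_unit h" .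
  moreover have "\<not> is_unit h"
  proof
    assume "is_unit h"
    hence "P dvd g" using Pgh by (metis dvd_mult_unit_iff dvd_refl)
    hence "P dvd x" using gdvd[OF xI] dvd_trans by blast
    thus False using nx by blast
  qed
  ultimately have "is_unit g" by blast
  then obtain k where k: "1 = g * k" by blast
  from g(1) obtain a b where "g = a * P + b * x" unfolding I_def by blast
  hence "(k * a) * P + (k * b) * x = 1" using k by (simp add: algebra_simps)
  thus ?thesis by blast
qed

lemma inv_mod_irr:
  fixes P x :: "'a::field poly"
  assumes "irreducible P" "\<not> P dvd x"
  shows "\<exists>w. P dvd x * w - 1"
proof -
  obtain a b where "a * P + b * x = 1" using bezout_irr[OF assms] by blast
  hence "x * b - 1 = P * (- a)" by (simp add: algebra_simps)
  thus ?thesis by (intro exI[of _ b]) simp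
qed

lemma irr_prime:
  fixes P a b :: "'a::field poly"
  assumes P: "irreducible P" and d: "P dvd a * b"
  shows "P dvd a \<or> P dvd b"
proof (cases "P dvd a")
  case False
  then obtain w where "P dvd a * w - 1" using inv_mod_irr[OF P] by blast
  hence "P dvd (a * w - 1) * b" by simp
  moreover have "P dvd (a * b) * w" using d by simp
  ultimately have "P dvd (a * b) * w - (a * w - 1) * b" by (rule dvd_diff[rotated])
  moreover have "(a * b) * w - (a * w - 1) * b = b" by (simp add: algebra_simps)
  ultimately show ?thesis by simp
qed simp

lemma irr_prime_power:
  fixes P a :: "'a::field poly"
  assumes P: "irreducible P" and d: "P dvd a ^ n"
  shows "P dvd a"
  using d
proof (induction n)
  case 0 thus ?case using P irreducible_not_unit by auto
next
  case (Suc n) thus ?case using irr_prime[OF P, of a "a^n"] by auto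
qed

lemma inv_mod_pow:
  fixes P x :: "'a::field poly"
  assumes P: "irreducible P" and nx: "\<not> P dvd x"
  shows "\<exists>w. P ^ n dvd x * w - 1"
proof -
  obtain w where "P dvd x * w - 1" using inv_mod_irr[OF P nx] by blast
  define e where "e = 1 - x * w"
  have Pe: "P dvd e" using \<open>P dvd x * w - 1\<close> unfolding e_def by (metis dvd_minus_iff minus_diff_eq)
  have "x * (w * (\<Sum>i<n. e ^ i)) - 1 = - (e ^ n)"
    using one_diff_power_eq[of e n] unfolding e_def by (simp add: algebra_simps)
  moreover have "P ^ n dvd e ^ n" using Pe by (simp add: dvd_power_same)
  ultimately show ?thesis by (metis dvd_minus_iff)
qed

lemma not_dvd_two:
  fixes P :: "'a::field poly"
  assumes P: "irreducible P" and two: "(2::'a) \<noteq> 0"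
  shows "\<not> P dvd 2"
proof
  assume "P dvd 2"
  hence "P dvd 2 * [:inverse 2:]" by (rule dvd_mult2)
  moreover have "(2::'a poly) * [:inverse 2:] = 1" using two by (simp add: numeral_poly)
  ultimately have "P dvd 1" by simp
  thus False using P irreducible_not_unit by auto
qed

lemma hensel_sq:
  fixes P u a :: "'a::field poly"
  assumes P: "irreducible P" and two: "(2::'a) \<noteq> 0" and ua: "P dvd u - a^2" and na: "\<not> P dvd a"
    and nu: "\<nu> \<ge> 1"
  shows "\<exists>A. P^\<nu> dvd u - A^2 \<and> \<not> P dvd A"
  using nu
proof (induction rule: dec_induct)
  case base thus ?case using ua na by auto
next
  case (step n)
  then obtain A where A: "P^n dvd u - A^2" "\<not> P dvd A" by blast
  obtain k where k: "u - A^2 = P^n * k" using A(1) by blast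
  have "\<not> P dvd 2 * A"
  proof
    assume "P dvd 2 * A"
    hence "P dvd 2 \<or> P dvd A" using irr_prime[OF P] by blast
    moreover have "\<not> P dvd 2" using not_dvd_two[OF P two] .
    ultimately show False using A(2) by blast
  qed
  then obtain w where "P dvd (2 * A) * w - 1" using inv_mod_irr[OF P] by blast
  then obtain c where c: "(2 * A) * w - 1 = P * c" by blast
  obtain m where m: "n = Suc m" using step(1) by (cases n) auto
  define A' where "A' = A + P^n * (k * w)"
  have u: "u = A^2 + P^n * k" using k by (simp add: algebra_simps)
  have tw: "2 * A * w = 1 + P * c" using c by (simp add: algebra_simps)
  have "u - A'^2 = P^n * k - P^n * k * (2 * A * w) - P^n * P^n * (k*w)^2"
    unfolding A'_def u by (simp add: algebra_simps power2_eq_square)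
  also have "\<dots> = P^(Suc n) * (- k * c - P^m * (k*w)^2)"
    unfolding tw m by (simp add: algebra_simps)
  finally have "P^(Suc n) dvd u - A'^2" by simp
  moreover have "\<not> P dvd A'"
  proof
    assume "P dvd A'"
    moreover have "P dvd P^n * (k * w)" using m by simp
    ultimately have "P dvd A" unfolding A'_def using dvd_add_left_iff by blast
    thus False using A(2) by blast
  qed
  ultimately show ?case by blast
qed


lemma mp_add: "map_poly to_ac (f + g) = map_poly to_ac f + map_poly (to_ac :: 'a::field \<Rightarrow> _) g"
  by (rule poly_eqI) (simp add: coeff_map_poly)

lemma mp_diff: "map_poly to_ac (f - g) = map_poly to_ac f - map_poly (to_ac :: 'a::field \<Rightarrow> _) g"
  by (rule poly_eqI) (simp add: coeff_map_poly)

lemma mp_mult: "map_poly to_ac (f * g) = map_poly to_ac f * map_poly (to_ac :: 'a::field \<Rightarrow> _) g"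
  by (rule poly_eqI) (simp add: coeff_map_poly coeff_mult to_ac_sum)

lemma mp_const: "map_poly to_ac [:c:] = [:to_ac (c::'a::field):]"
  by (rule poly_eqI) (simp add: coeff_map_poly coeff_pCons split: nat.splits)

lemma mp_X: "map_poly (to_ac :: 'a::field \<Rightarrow> _) [:0, 1:] = [:0, 1:]"
  by (rule poly_eqI) (simp add: coeff_map_poly coeff_pCons split: nat.splits)

lemma mp_1: "map_poly (to_ac :: 'a::field \<Rightarrow> _) 1 = 1"
  using mp_const[of "1::'a"] by (simp add: one_pCons)

lemma mp_power: "map_poly to_ac (f ^ n) = map_poly (to_ac :: 'a::field \<Rightarrow> _) f ^ n"
  by (induction n) (simp_all add: mp_mult mp_1)

lemma poly_mp_0: "poly (map_poly (to_ac :: 'a::field \<Rightarrow> _) f) 0 = to_ac (poly f 0)"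
  by (simp add: poly_0_coeff_0 coeff_map_poly)

lemma frob_poly:
  fixes f :: "'a::{field,finite} poly"
  shows "poly (map_poly to_ac f) y ^ CARD('a) = poly (map_poly to_ac f) (y ^ CARD('a))"
proof -
  let ?g = "map_poly (to_ac :: 'a \<Rightarrow> _) f"
  have "poly ?g y ^ CARD('a) = (\<Sum>i\<le>degree ?g. (coeff ?g i * y ^ i) ^ CARD('a))"
    unfolding poly_altdef by (rule frob_sum)
  also have "\<dots> = (\<Sum>i\<le>degree ?g. coeff ?g i * (y ^ CARD('a)) ^ i)"
  proof (rule sum.cong[OF refl])
    fix i
    have "coeff ?g i ^ CARD('a) = coeff ?g i"
      by (simp add: coeff_map_poly ff_pow_card flip: to_ac_power)
    moreover have "(y ^ i) ^ CARD('a) = (y ^ CARD('a)) ^ i"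
      by (simp only: power_mult[symmetric] mult.commute)
    ultimately show "(coeff ?g i * y ^ i) ^ CARD('a) = coeff ?g i * (y ^ CARD('a)) ^ i"
      by (simp only: power_mult_distrib)
  qed
  also have "\<dots> = poly ?g (y ^ CARD('a))" unfolding poly_altdef ..
  finally show ?thesis .
qed

lemma frob_poly_iter:
  fixes f :: "'a::{field,finite} poly"
  shows "poly (map_poly to_ac f) y ^ (CARD('a) ^ i) = poly (map_poly to_ac f) (y ^ (CARD('a) ^ i))"
proof (induction i)
  case 0 thus ?case by simp
next
  case (Suc i)
  have "poly (map_poly to_ac f) y ^ (CARD('a) ^ Suc i) =
        (poly (map_poly to_ac f) y ^ (CARD('a) ^ i)) ^ CARD('a)"
    by (simp only: power_Suc2 power_mult)
  also have "\<dots> = poly (map_poly to_ac f) ((y ^ (CARD('a) ^ i)) ^ CARD('a))"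
    unfolding Suc by (rule frob_poly)
  also have "(y ^ (CARD('a) ^ i)) ^ CARD('a) = y ^ (CARD('a) ^ Suc i)"
    by (simp only: power_Suc2 power_mult)
  finally show ?case .
qed

lemma geom_nat: "m * (\<Sum>i<d. (Suc m) ^ i) + 1 = (Suc m) ^ d"
proof (induction d)
  case 0 thus ?case by simp
next
  case (Suc d)
  have "m * (\<Sum>i<Suc d. (Suc m) ^ i) + 1 = (m * (\<Sum>i<d. (Suc m) ^ i) + 1) + m * (Suc m) ^ d"
    by (simp add: algebra_simps)
  also have "\<dots> = (Suc m) ^ Suc d" unfolding Suc by simp
  finally show ?case .
qed

lemma mset_eq_size:
  assumes "M \<subseteq># N" "size M = size N"
  shows "M = N"
proof (rule ccontr)
  assume "M \<noteq> N"
  hence "M \<subset># N" using assms(1) by (simp add: subset_mset.le_less)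
  hence "size M < size N" by (rule mset_subset_size)
  thus False using assms(2) by simp
qed


lemma field_facts:
  fixes P :: "'a::{field,finite} poly"
  assumes qodd: "odd CARD('a)" and mon: "lead_coeff P = 1" and irr: "irreducible P"
    and P0: "poly P 0 \<noteq> 0"
  shows "((\<exists>s. P dvd s^2 + [:0,1:]) \<longleftrightarrow> (\<exists>x. x^2 = poly P 0))
         \<and> (\<forall>c. \<exists>a b. P dvd c - (a^2 + [:0,1:] * b^2))"
proof -
  define q where "q = CARD('a)"
  define d where "d = degree P"
  define Q where "Q = q ^ d"
  have "card {0::'a, 1} \<le> q" unfolding q_def by (rule card_mono) auto
  hence q2: "q \<ge> 2" by simp
  have qo: "odd q" using qodd by (simp add: q_def)
  have q3: "q \<ge> 3" using q2 qo by presburger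
  have Pnz: "P \<noteq> 0" using mon by auto
  have d0: "d > 0"
  proof (rule ccontr)
    assume "\<not> d > 0"
    hence "degree P = 0" by (simp add: d_def)
    hence "is_unit P" using is_unit_iff_degree[OF Pnz] by simp
    thus False using irr irreducible_not_unit by blast
  qed
  define mp where "mp = (map_poly to_ac :: 'a poly \<Rightarrow> 'a alg_closure poly)"
  define Pk where "Pk = mp P"
  have degPk: "degree Pk = d" by (simp add: Pk_def mp_def d_def degree_map_poly)
  have lcPk: "lead_coeff Pk = 1" using mon
    by (simp add: Pk_def mp_def coeff_map_poly degree_map_poly)
  have Pk0: "Pk \<noteq> 0" using lcPk by auto
  obtain A where A: "size A = degree Pk" "Pk = smult (lead_coeff Pk) (\<Prod>x\<in>#A. [:-x, 1:])"
    using alg_closed_imp_factorization[OF Pk0] by blast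
  have Pk_eq: "Pk = (\<Prod>x\<in>#A. [:-x, 1:])" using A(2) lcPk by simp
  have polyPk: "poly Pk y = (\<Prod>x\<in>#A. y - x)" for y
    by (subst Pk_eq) (simp add: poly_prod_mset)
  have root_iff: "poly Pk y = 0 \<longleftrightarrow> y \<in># A" for y
    unfolding polyPk by (auto simp: prod_mset_zero_iff image_iff)
  have sizeA: "size A = d" using A(1) degPk by simp
  hence "A \<noteq> {#}" using d0 by auto
  then obtain r where rA: "r \<in># A" by blast
  define ev where "ev = (\<lambda>f. poly (mp f) r)"
  have ev_add: "ev (f + g) = ev f + ev g" for f g by (simp add: ev_def mp_def mp_add)
  have ev_diff: "ev (f - g) = ev f - ev g" for f g by (simp add: ev_def mp_def mp_diff)
  have ev_mult: "ev (f * g) = ev f * ev g" for f g by (simp add: ev_def mp_def mp_mult)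
  have ev_const: "ev [:c:] = to_ac c" for c by (simp add: ev_def mp_def mp_const)
  have ev_X: "ev [:0,1:] = r" by (simp add: ev_def mp_def mp_X)
  have ev_1: "ev 1 = 1" by (simp add: ev_def mp_def mp_1)
  have ev_0: "ev 0 = 0" by (simp add: ev_def mp_def)
  have ev_power: "ev (f ^ n) = ev f ^ n" for f n by (simp add: ev_def mp_def mp_power)
  have ev_minus: "ev (- f) = - ev f" for f using ev_diff[of 0 f] ev_0 by simp
  have evP: "ev P = 0" using root_iff[of r] rA by (simp add: ev_def Pk_def)
  have ev0_dvd: "ev g = 0 \<longleftrightarrow> P dvd g" for g
  proof
    assume "P dvd g"
    then obtain h where "g = P * h" by blast
    thus "ev g = 0" by (simp add: ev_mult evP)
  next
    assume e: "ev g = 0"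
    show "P dvd g"
    proof (rule ccontr)
      assume "\<not> P dvd g"
      then obtain a b where "a * P + b * g = 1" using bezout_irr[OF irr] by blast
      hence "ev (a * P + b * g) = 1" using ev_1 by simp
      thus False by (simp add: ev_add ev_mult evP e)
    qed
  qed
  define E where "E = ev ` Dn d"
  have cDn: "finite (Dn d :: 'a poly set)" "card (Dn d :: 'a poly set) = Q"
    using card_Dn[of d, where 'a='a] by (simp_all add: Q_def q_def)
  have ev_mod: "ev g = ev (g mod P)" for g
  proof -
    have "g = (g div P) * P + g mod P" by simp
    hence "ev g = ev (g div P) * ev P + ev (g mod P)" by (metis ev_add ev_mult)
    thus ?thesis by (simp add: evP)
  qed
  have E_iff: "y \<in> E \<longleftrightarrow> (\<exists>f. y = ev f)" for y
  proof
    assume "\<exists>f. y = ev f"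
    then obtain f where "y = ev f" by blast
    moreover have "f mod P \<in> Dn d" using mod_in_Dn[OF Pnz] by (simp add: d_def)
    ultimately show "y \<in> E" unfolding E_def using ev_mod by blast
  qed (auto simp: E_def)
  have Dn_diff: "f \<in> Dn d \<Longrightarrow> g \<in> Dn d \<Longrightarrow> f - g \<in> Dn d" for f g
    by (auto simp: Dn_def)
  have dvd_Dn: "f \<in> Dn d \<Longrightarrow> P dvd f \<Longrightarrow> f = 0" for f
  proof (rule ccontr)
    assume f: "f \<in> Dn d" "P dvd f" "f \<noteq> 0"
    hence "degree f < d" by (simp add: Dn_iff)
    moreover have "d \<le> degree f" using dvd_imp_degree_le[OF f(2) f(3)] by (simp add: d_def)
    ultimately show False by simp
  qed
  have inj: "inj_on ev (Dn d)"
  proof (rule inj_onI)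
    fix f g assume fg: "f \<in> Dn d" "g \<in> Dn d" "ev f = ev g"
    hence "ev (f - g) = 0" by (simp add: ev_diff)
    hence "P dvd f - g" using ev0_dvd by blast
    hence "f - g = 0" using dvd_Dn[OF Dn_diff[OF fg(1,2)]] by blast
    thus "f = g" by simp
  qed
  have finE: "finite E" unfolding E_def using cDn by simp
  have cardE: "card E = Q" unfolding E_def using card_image[OF inj] cDn by simp
  have E0: "0 \<in> E" using E_iff ev_0 by metis
  have Emul: "x \<in> E \<Longrightarrow> y \<in> E \<Longrightarrow> x * y \<in> E" for x y using E_iff ev_mult by metis
  have "q ^ 1 \<le> q ^ d" by (rule power_increasing) (use d0 q2 in auto)
  hence Q1: "Q \<ge> 3" unfolding Q_def using q3 by simp
  have ferm: "y ^ (Q - 1) = 1" if yE: "y \<in> E" and y0: "y \<noteq> 0" for y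
  proof -
    define E' where "E' = E - {0}"
    have finE': "finite E'" using finE by (simp add: E'_def)
    have injy: "inj_on (\<lambda>z. y * z) E'" using y0 by (auto intro!: inj_onI)
    have sub: "(\<lambda>z. y * z) ` E' \<subseteq> E'" using Emul[OF yE] y0 by (auto simp: E'_def)
    have "card ((\<lambda>z. y * z) ` E') = card E'" by (rule card_image[OF injy])
    hence img: "(\<lambda>z. y * z) ` E' = E'" using card_subset_eq[OF finE' sub] by simp
    have "(\<Prod>z\<in>E'. z) = (\<Prod>w\<in>(\<lambda>z. y * z) ` E'. w)" using img by simp
    also have "\<dots> = (\<Prod>z\<in>E'. y * z)" by (rule prod.reindex[OF injy, unfolded comp_def])
    also have "\<dots> = y ^ card E' * (\<Prod>z\<in>E'. z)" by (simp add: prod.distrib)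
    finally have eq: "(\<Prod>z\<in>E'. z) = y ^ card E' * (\<Prod>z\<in>E'. z)" .
    have "(\<Prod>z\<in>E'. z) \<noteq> 0" using finE' by (simp add: E'_def)
    hence "y ^ card E' = 1" using eq by simp
    moreover have "card E' = Q - 1" using cardE E0 finE by (simp add: E'_def)
    ultimately show ?thesis by simp
  qed
  have fermQ: "y ^ Q = y" if "y \<in> E" for y
  proof (cases "y = 0")
    case True thus ?thesis using Q1 by simp
  next
    case False
    have "y ^ Q = y ^ (Q - 1) * y" using Q1 by (metis Suc_diff_1 less_le_trans power_Suc2 zero_less_numeral)
    thus ?thesis using ferm[OF that False] by simp
  qed
  have iter: "ev f ^ (q ^ i) = poly (mp f) (r ^ (q ^ i))" for f i
    unfolding ev_def mp_def q_def by (rule frob_poly_iter)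
  have rE: "r \<in> E" using E_iff ev_X by metis
  have rQ: "r ^ (q ^ d) = r" using fermQ[OF rE] by (simp add: Q_def)
  define \<rho> where "\<rho> = (\<lambda>i. r ^ (q ^ i))"
  have powpow: "(r ^ (q ^ a)) ^ (q ^ b) = r ^ (q ^ (a + b))" for a b
    by (simp add: power_mult power_add)
  have roots: "poly Pk (\<rho> i) = 0" for i
  proof -
    have "ev P ^ (q ^ i) = poly Pk (\<rho> i)" using iter[of P i] by (simp add: Pk_def \<rho>_def)
    moreover have "q ^ i \<noteq> 0" using q2 by simp
    ultimately show ?thesis using evP q2 by (simp add: power_0_left)
  qed
  have nofix: False if k: "r ^ (q ^ k) = r" "0 < k" "k < d" for k
  proof -
    have fx: "y ^ (q ^ k) = y" if "y \<in> E" for y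
    proof -
      obtain f where "y = ev f" using \<open>y \<in> E\<close> E_iff by blast
      thus ?thesis using iter[of f k] k(1) by (simp add: ev_def)
    qed
    define pk where "pk = (monom 1 (q ^ k) + [:0, -1:] :: 'a alg_closure poly)"
    have "q ^ 1 \<le> q ^ k" by (rule power_increasing) (use k(2) q2 in auto)
    hence qk: "q ^ k \<ge> 3" using q3 by simp
    have degpk: "degree pk = q ^ k" unfolding pk_def using qk
      by (subst degree_add_eq_left) (simp_all add: degree_monom_eq)
    have pk0: "pk \<noteq> 0" using degpk qk by (metis degree_0 not_numeral_le_zero)
    have "E \<subseteq> {x. poly pk x = 0}" using fx by (auto simp: pk_def poly_monom)
    hence "card E \<le> card {x. poly pk x = 0}" by (rule card_mono[OF poly_roots_finite[OF pk0]])
    also have "\<dots> \<le> q ^ k" using card_poly_roots_bound[OF pk0] degpk by simp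
    also have "\<dots> < q ^ d" using k(3) q2 by (simp add: power_strict_increasing)
    finally show False using cardE by (simp add: Q_def)
  qed
  have inj\<rho>: "inj_on \<rho> {..<d}"
  proof -
    have key: "i = j" if ij: "i \<le> j" "j < d" "\<rho> i = \<rho> j" for i j
    proof (rule ccontr)
      assume "i \<noteq> j"
      hence ij': "i < j" using ij by simp
      have "(\<rho> i) ^ (q ^ (d - j)) = (\<rho> j) ^ (q ^ (d - j))" using ij by simp
      hence "r ^ (q ^ (i + (d - j))) = r ^ (q ^ (j + (d - j)))" by (simp add: \<rho>_def powpow)
      also have "j + (d - j) = d" using ij by simp
      finally have rr: "r ^ (q ^ (i + (d - j))) = r" using rQ by simp
      have k1: "0 < i + (d - j)" "i + (d - j) < d" using ij ij' by auto
      show False by (rule nofix[OF rr k1])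
    qed
    show ?thesis
    proof (rule inj_onI)
      fix i j assume "i \<in> {..<d}" "j \<in> {..<d}" "\<rho> i = \<rho> j"
      thus "i = j" using key[of i j] key[of j i] by (cases "i \<le> j") auto
    qed
  qed
  define R where "R = \<rho> ` {..<d}"
  have cardR: "card R = d" unfolding R_def using card_image[OF inj\<rho>] by simp
  have RA: "R \<subseteq> set_mset A" unfolding R_def using roots root_iff by blast
  have "mset_set R \<subseteq># mset_set (set_mset A)"
    by (rule subset_imp_msubset_mset_set[OF RA]) simp
  also have "\<dots> \<subseteq># A" by (rule mset_set_set_mset_msubset)
  finally have "mset_set R = A" by (rule mset_eq_size) (simp add: cardR sizeA)
  hence AR: "A = mset_set R" by simp
  define S where "S = (\<Sum>i<d. q ^ i)"
  have normP: "to_ac (poly P 0) = (- r) ^ S"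
  proof -
    have "to_ac (poly P 0) = poly Pk 0" by (simp add: Pk_def mp_def poly_mp_0)
    also have "\<dots> = (\<Prod>x\<in>#A. 0 - x)" by (rule polyPk)
    also have "\<dots> = (\<Prod>x\<in>R. - x)" by (simp add: AR prod_unfold_prod_mset)
    also have "\<dots> = (\<Prod>i<d. - \<rho> i)" unfolding R_def
      by (subst prod.reindex[OF inj\<rho>]) (simp add: comp_def)
    also have "\<dots> = (\<Prod>i<d. (- r) ^ (q ^ i))"
      by (rule prod.cong[OF refl]) (simp add: \<rho>_def power_minus_odd qo)
    also have "\<dots> = (- r) ^ S" by (simp add: S_def power_sum)
    finally show ?thesis .
  qed
  obtain m where qm: "q = Suc m" using q2 by (cases q) auto
  have QS: "m * S + 1 = Q" unfolding S_def Q_def qm by (rule geom_nat)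
  have S0: "S > 0" unfolding S_def using d0 by (auto intro!: sum_pos2[of _ 0])
  have r0: "r \<noteq> 0"
  proof
    assume "r = 0"
    hence "to_ac (poly P 0) = 0" using normP S0 by simp
    thus False using P0 by simp
  qed
  have Qodd: "odd Q" unfolding Q_def using qo by simp
  have eulE: "(\<lambda>y. y^2) ` (E - {0}) = {x \<in> E - {0}. x ^ ((Q - 1) div 2) = 1}"
             "card ((\<lambda>y. y^2) ` (E - {0})) = (Q - 1) div 2"
    using euler_gen[OF finE E0 Emul, of "Q - 1"] cardE Qodd Q1 ferm by auto
  have fermA: "x ^ (q - 1) = 1" if "x \<noteq> 0" for x :: 'a
  proof -
    have "x ^ q = x" unfolding q_def by (rule ff_pow_card)
    hence "x ^ (q - 1) * x = 1 * x" using q2 by (metis Suc_diff_1 less_le_trans power_Suc2 pos2 mult_1)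
    thus ?thesis using that by simp
  qed
  have eulA: "(\<lambda>y. y^2) ` (UNIV - {0::'a}) = {x \<in> UNIV - {0}. x ^ ((q - 1) div 2) = 1}"
    using euler_gen(1)[of "UNIV::'a set" "q - 1"] fermA qo q3 by (auto simp: q_def)
  have part1: "(\<exists>s. P dvd s^2 + [:0,1:]) \<longleftrightarrow> (\<exists>x. x^2 = poly P 0)"
  proof -
    have s1: "(\<exists>s. P dvd s^2 + [:0,1:]) \<longleftrightarrow> (\<exists>y\<in>E. y^2 = - r)"
    proof
      assume "\<exists>s. P dvd s^2 + [:0,1:]"
      then obtain s where "P dvd s^2 + [:0,1:]" by blast
      hence "ev (s^2 + [:0,1:]) = 0" using ev0_dvd by blast
      hence "(ev s)^2 = - r" by (simp add: ev_add ev_power ev_X eq_neg_iff_add_eq_0)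
      moreover have "ev s \<in> E" using E_iff by blast
      ultimately show "\<exists>y\<in>E. y^2 = - r" by blast
    next
      assume "\<exists>y\<in>E. y^2 = - r"
      then obtain y where y: "y \<in> E" "y^2 = - r" by blast
      then obtain f where "y = ev f" using E_iff by blast
      hence "(ev f)^2 = - r" using y by simp
      hence "ev (f^2 + [:0,1:]) = 0" by (simp add: ev_add ev_power ev_X)
      thus "\<exists>s. P dvd s^2 + [:0,1:]" using ev0_dvd by blast
    qed
    have mrE: "- r \<in> E - {0}" using E_iff ev_minus ev_X r0 by (metis DiffI neg_equal_0_iff_equal singletonD)
    have s2: "(\<exists>y\<in>E. y^2 = - r) \<longleftrightarrow> (- r) \<in> (\<lambda>y. y^2) ` (E - {0})"
    proof
      assume "\<exists>y\<in>E. y^2 = - r"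
      then obtain y where y: "y \<in> E" "y^2 = - r" by blast
      hence "y \<noteq> 0" using r0 by auto
      hence "y \<in> E - {0}" using y by simp
      thus "- r \<in> (\<lambda>y. y^2) ` (E - {0})" using y(2) by (metis image_eqI)
    next
      assume "- r \<in> (\<lambda>y. y^2) ` (E - {0})"
      thus "\<exists>y\<in>E. y^2 = - r" by auto
    qed
    have s3: "(- r) \<in> (\<lambda>y. y^2) ` (E - {0}) \<longleftrightarrow> (- r) ^ ((Q - 1) div 2) = 1"
      using mrE by (simp add: eulE(1))
    have Qm: "(Q - 1) div 2 = S * (m div 2)"
    proof -
      have "Q - 1 = m * S" using QS by simp
      moreover have "even m" using qo qm by simp
      ultimately show ?thesis by (auto elim!: evenE)
    qed
    have s4: "(- r) ^ ((Q - 1) div 2) = to_ac (poly P 0 ^ (m div 2))"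
    proof -
      have "(- r) ^ ((Q - 1) div 2) = ((- r) ^ S) ^ (m div 2)" by (simp only: Qm power_mult)
      thus ?thesis by (simp add: normP)
    qed
    have s5: "(to_ac (poly P 0 ^ (m div 2)) = 1) \<longleftrightarrow> poly P 0 ^ ((q - 1) div 2) = 1"
      by (metis qm diff_Suc_1 to_ac_1 to_ac_eq_iff)
    have s6: "poly P 0 ^ ((q - 1) div 2) = 1 \<longleftrightarrow> (\<exists>x. x^2 = poly P 0)"
    proof -
      have "poly P 0 ^ ((q - 1) div 2) = 1 \<longleftrightarrow> poly P 0 \<in> (\<lambda>y. y^2) ` (UNIV - {0::'a})"
        using P0 by (simp add: eulA)
      also have "\<dots> \<longleftrightarrow> (\<exists>x. x^2 = poly P 0)"
      proof
        assume "poly P 0 \<in> (\<lambda>y. y^2) ` (UNIV - {0::'a})"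
        thus "\<exists>x. x^2 = poly P 0" by auto
      next
        assume "\<exists>x. x^2 = poly P 0"
        then obtain x where x: "x^2 = poly P 0" by blast
        hence "x \<noteq> 0" using P0 by auto
        thus "poly P 0 \<in> (\<lambda>y. y^2) ` (UNIV - {0::'a})" using x by (metis image_eqI DiffI UNIV_I singletonD)
      qed
      finally show ?thesis .
    qed
    show ?thesis using s1 s2 s3 s4 s5 s6 by simp
  qed
  have part2: "\<exists>a b. P dvd c - (a^2 + [:0,1:] * b^2)" for c
  proof -
    define XX where "XX = (\<lambda>y. y^2) ` E"
    define YY where "YY = (\<lambda>w. ev c - r * w) ` XX"
    have XE: "XX = insert 0 ((\<lambda>y. y^2) ` (E - {0}))" unfolding XX_def using E0 by auto
    have "0 \<notin> (\<lambda>y. y^2) ` (E - {0})" by auto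
    hence cX: "card XX = (Q - 1) div 2 + 1" unfolding XE using eulE(2) finE by simp
    have injY: "inj_on (\<lambda>w. ev c - r * w) XX" using r0 by (auto intro!: inj_onI)
    have cY: "card YY = card XX" unfolding YY_def by (rule card_image[OF injY])
    have XsubE: "XX \<subseteq> E" unfolding XX_def using Emul by (auto simp: power2_eq_square)
    have YsubE: "YY \<subseteq> E"
    proof
      fix z assume "z \<in> YY"
      then obtain w where w: "w \<in> XX" "z = ev c - r * w" unfolding YY_def by blast
      then obtain f where "w = ev f" using XsubE E_iff by blast
      have "ev (c - [:0,1:] * f) = ev c - r * ev f" by (simp only: ev_diff ev_mult ev_X)
      hence "z = ev (c - [:0,1:] * f)" using w \<open>w = ev f\<close> by simp
      thus "z \<in> E" using E_iff by blast
    qed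
    have "XX \<inter> YY \<noteq> {}"
    proof
      assume dis: "XX \<inter> YY = {}"
      have "card (XX \<union> YY) = card XX + card YY"
        by (rule card_Un_disjoint) (use finE XsubE YsubE dis finite_subset in auto)
      moreover have "card (XX \<union> YY) \<le> Q" using XsubE YsubE finE cardE by (metis Un_least card_mono)
      ultimately show False using cX cY Qodd Q1 by (auto elim!: oddE)
    qed
    then obtain z where z: "z \<in> XX" "z \<in> YY" by blast
    then obtain y where y: "y \<in> E" "z = y^2" unfolding XX_def by blast
    obtain w where w: "w \<in> XX" "z = ev c - r * w" using z(2) unfolding YY_def by blast
    then obtain u where u: "u \<in> E" "w = u^2" unfolding XX_def by blast
    obtain a where a: "y = ev a" using y(1) E_iff by blast
    obtain b where b: "u = ev b" using u(1) E_iff by blast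
    have "ev (c - (a^2 + [:0,1:] * b^2)) = ev c - ((ev a)^2 + r * (ev b)^2)"
      by (simp only: ev_diff ev_add ev_mult ev_power ev_X)
    hence "ev (c - (a^2 + [:0,1:] * b^2)) = 0"
      using y(2) w(2) u(2) a b by (simp add: algebra_simps)
    thus ?thesis using ev0_dvd by blast
  qed
  show ?thesis using part1 part2 by blast
qed


lemma two_ne_zero_ff:
  assumes "odd CARD('a::{field,finite})"
  shows "(2::'a) \<noteq> 0"
proof
  assume h: "(2::'a) = 0"
  have "CHAR('a) dvd 2" using h of_nat_eq_0_iff_char_dvd[of 2, where 'a='a] by simp
  moreover have "prime (2::nat)" by simp
  ultimately have "CHAR('a) = 1 \<or> CHAR('a) = 2" unfolding prime_nat_iff by blast
  moreover have "CHAR('a) \<noteq> 1" using ff_char_prime[where 'a='a] by auto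
  ultimately have c2: "CHAR('a) = 2" by blast
  obtain m where m: "CARD('a) = CHAR('a) ^ m" using ff_card_prime_power by blast
  have "m \<noteq> 0"
  proof
    assume "m = 0"
    hence "CARD('a) = 1" using m by simp
    moreover have "card {0::'a, 1} \<le> CARD('a)" by (rule card_mono) auto
    ultimately show False by simp
  qed
  hence "even (CARD('a))" using m c2 by simp
  thus False using assms by simp
qed

lemma irr_X: "irreducible ([:0, 1:] :: 'a::field poly)"
  by (rule irreducible_linear_field_poly) simp

lemma Aq_sub:
  fixes P :: "'a::field poly"
  assumes "P \<noteq> 0"
  shows "Aq P \<nu> \<subseteq> Dn (degree P * \<nu>)"
proof
  fix f assume "f \<in> Aq P \<nu>"
  then obtain A B where f: "f = (A^2 + [:0,1:] * B^2) mod P ^ \<nu>" unfolding Aq_def by blast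
  have "P ^ \<nu> \<noteq> 0" using assms by simp
  hence "f \<in> Dn (degree (P ^ \<nu>))" unfolding f by (rule mod_in_Dn)
  thus "f \<in> Dn (degree P * \<nu>)" using assms by (simp add: degree_power_eq mult.commute)
qed

lemma Aq_mem:
  fixes P :: "'a::field poly"
  assumes "P \<noteq> 0" "f \<in> Dn (degree P * \<nu>)" "P ^ \<nu> dvd f - (A^2 + [:0,1:] * B^2)"
  shows "f \<in> Aq P \<nu>"
proof -
  have nz: "P ^ \<nu> \<noteq> 0" using assms by simp
  have "f \<in> Dn (degree (P ^ \<nu>))" using assms by (simp add: degree_power_eq mult.commute)
  hence "f = f mod P ^ \<nu>" using mod_Dn_id[OF nz] by simp
  also have "\<dots> = (A^2 + [:0,1:] * B^2) mod P ^ \<nu>" using assms(3) by (simp add: mod_eq_dvd_iff)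
  finally show ?thesis unfolding Aq_def by blast
qed

lemma notdvdX:
  fixes P :: "'a::field poly"
  assumes "P dvd [:0,1:]" "degree P > 0"
  shows "poly P 0 = 0"
proof -
  obtain k where k: "[:0,1:] = P * k" using assms(1) by blast
  have k0: "k \<noteq> 0" using k by auto
  have P0: "P \<noteq> 0" using k by auto
  have "degree ([:0,1::'a:]) = degree P + degree k" unfolding k by (rule degree_mult_eq[OF P0 k0])
  hence "degree k = 0" using assms(2) by simp
  then obtain c where c: "k = [:c:]" by (metis degree_eq_zeroE)
  have "c \<noteq> 0" using k0 c by simp
  have "poly ([:0,1::'a:]) 0 = poly P 0 * c" unfolding k c by simp
  thus ?thesis using \<open>c \<noteq> 0\<close> by simp
qed

lemma half_identity_gen:
  fixes c f :: "'b::comm_ring_1"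
  shows "(c * (f + 1))^2 - (c * (1 - f))^2 = (c * 2) * (c * 2) * f"
  by (simp add: power2_eq_square algebra_simps)

lemma half_identity:
  fixes f :: "'a::field poly"
  assumes two: "(2::'a) \<noteq> 0"
  shows "([:inverse 2:] * (f + 1))^2 - ([:inverse 2:] * (1 - f))^2 = f"
proof -
  have i2: "[:inverse 2:] * (2::'a poly) = 1" using two by (simp add: numeral_poly)
  have "([:inverse 2:] * (f + 1))^2 - ([:inverse 2:] * (1 - f))^2
        = ([:inverse 2:] * 2) * ([:inverse 2:] * 2) * f"
    by (rule half_identity_gen)
  also have "\<dots> = f" by (simp only: i2 mult_1_left)
  finally show ?thesis .
qed

lemma case_plus:
  fixes P :: "'a::{field,finite} poly"
  assumes qodd: "odd CARD('a)" and irr: "irreducible P" and dP: "degree P > 0"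
    and P0: "poly P 0 \<noteq> 0" and s: "\<exists>s. P dvd s^2 + [:0,1:]" and nu: "\<nu> \<ge> 1"
  shows "Aq P \<nu> = Dn (degree P * \<nu>)"
proof
  have Pnz: "P \<noteq> 0" using dP by auto
  show "Aq P \<nu> \<subseteq> Dn (degree P * \<nu>)" by (rule Aq_sub[OF Pnz])
  show "Dn (degree P * \<nu>) \<subseteq> Aq P \<nu>"
  proof
    fix f :: "'a poly" assume f: "f \<in> Dn (degree P * \<nu>)"
    have two: "(2::'a) \<noteq> 0" by (rule two_ne_zero_ff[OF qodd])
    obtain s where s: "P dvd s^2 + [:0,1:]" using s by blast
    have ns: "\<not> P dvd s"
    proof
      assume "P dvd s"
      hence "P dvd s^2" by (simp add: power2_eq_square)
      hence "P dvd [:0,1:]" using s by (metis dvd_add_right_iff)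
      thus False using notdvdX dP P0 by blast
    qed
    have "P dvd (- [:0,1:]) - s^2" using s by (metis dvd_minus_iff minus_diff_eq diff_minus_eq_add add.commute)
    then obtain s' where s': "P ^ \<nu> dvd (- [:0,1:]) - s'^2" "\<not> P dvd s'"
      using hensel_sq[OF irr two _ ns nu] by blast
    obtain w where w: "P ^ \<nu> dvd s' * w - 1" using inv_mod_pow[OF irr s'(2)] by blast
    define x where "x = [:inverse 2:] * (f + 1)"
    define h where "h = [:inverse 2:] * (1 - f)"
    define y where "y = w * h"
    have id: "x^2 - h^2 = f" unfolding x_def h_def by (rule half_identity[OF two])
    have "f - (x^2 + [:0,1:] * y^2) = - ((h - s' * y) * (h + s' * y)) + ((- [:0,1:]) - s'^2) * y^2"
      using id by (simp add: algebra_simps power2_eq_square)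
    moreover have "h - s' * y = - ((s' * w - 1) * h)" by (simp add: y_def algebra_simps)
    ultimately have eq: "f - (x^2 + [:0,1:] * y^2) = (s' * w - 1) * h * (h + s' * y) + ((- [:0,1:]) - s'^2) * y^2"
      by simp
    have "P ^ \<nu> dvd (s' * w - 1) * h * (h + s' * y)" using w by (simp add: mult.assoc)
    moreover have "P ^ \<nu> dvd ((- [:0,1:]) - s'^2) * y^2" using s'(1) by simp
    ultimately have "P ^ \<nu> dvd f - (x^2 + [:0,1:] * y^2)" unfolding eq by (rule dvd_add)
    thus "f \<in> Aq P \<nu>" by (rule Aq_mem[OF Pnz f])
  qed
qed


lemma zero_in_Aq: "(0::'a::field poly) \<in> Aq P k"
  unfolding Aq_def by (rule CollectI, rule exI[of _ 0], rule exI[of _ 0]) simp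

lemma Aq_0: "Aq (P::'a::field poly) 0 = {0}"
  unfolding Aq_def by auto

lemma minus_N1:
  fixes P A B :: "'a::field poly"
  assumes irr: "irreducible P" and ns: "\<not> (\<exists>s. P dvd s^2 + [:0,1:])"
    and d: "P dvd A^2 + [:0,1:] * B^2"
  shows "P dvd A \<and> P dvd B"
proof -
  have PB: "P dvd B"
  proof (rule ccontr)
    assume "\<not> P dvd B"
    then obtain w where w: "P dvd B * w - 1" using inv_mod_irr[OF irr] by blast
    define s where "s = A * w"
    have eq: "s^2 + [:0,1:] = w^2 * (A^2 + [:0,1:] * B^2) - [:0,1:] * (1 + B * w) * (B * w - 1)"
      unfolding s_def by (simp add: algebra_simps power2_eq_square)
    have "P dvd w^2 * (A^2 + [:0,1:] * B^2)" using d by simp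
    moreover have "P dvd [:0,1:] * (1 + B * w) * (B * w - 1)" by (rule dvd_mult[OF w])
    ultimately have "P dvd s^2 + [:0,1:]" unfolding eq by (rule dvd_diff)
    thus False using ns by blast
  qed
  hence "P dvd [:0,1:] * B^2" by (intro dvd_mult) (simp add: power2_eq_square)
  hence "P dvd A^2" using d by (metis dvd_add_left_iff)
  hence "P dvd A" by (rule irr_prime_power[OF irr])
  thus ?thesis using PB by blast
qed

lemma minus_R3:
  fixes P c :: "'a::{field,finite} poly"
  assumes qodd: "odd CARD('a)" and irr: "irreducible P" and dP: "degree P > 0"
    and P0: "poly P 0 \<noteq> 0" and all: "\<forall>c. \<exists>a b. P dvd c - (a^2 + [:0,1:] * b^2)"
    and nc: "\<not> P dvd c" and nu: "\<nu> \<ge> 1"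
  shows "\<exists>A B. P ^ \<nu> dvd c - (A^2 + [:0,1:] * B^2)"
proof -
  have two: "(2::'a) \<noteq> 0" by (rule two_ne_zero_ff[OF qodd])
  obtain a b where ab: "P dvd c - (a^2 + [:0,1:] * b^2)" using all by blast
  show ?thesis
  proof (cases "P dvd a")
    case False
    have "P dvd (c - [:0,1:] * b^2) - a^2" using ab by (simp add: algebra_simps)
    then obtain A where A: "P ^ \<nu> dvd (c - [:0,1:] * b^2) - A^2" using hensel_sq[OF irr two _ False nu] by blast
    have "(c - [:0,1:] * b^2) - A^2 = c - (A^2 + [:0,1:] * b^2)" by (simp add: algebra_simps)
    thus ?thesis using A by metis
  next
    case True
    hence Pa2: "P dvd a^2" by (simp add: power2_eq_square)
    have cXb: "P dvd c - [:0,1:] * b^2"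
    proof -
      have e: "c - [:0,1:] * b^2 = (c - (a^2 + [:0,1:] * b^2)) + a^2" by (simp add: algebra_simps)
      show ?thesis unfolding e by (rule dvd_add[OF ab Pa2])
    qed
    have nb: "\<not> P dvd b"
    proof
      assume "P dvd b"
      hence "P dvd [:0,1:] * b^2" by (intro dvd_mult) (simp add: power2_eq_square)
      hence "P dvd c" using cXb by (metis dvd_diff_right_iff diff_add_cancel dvd_add)
      thus False using nc by blast
    qed
    have nX: "\<not> P dvd [:0,1:]" using notdvdX dP P0 by blast
    obtain w where w: "P ^ \<nu> dvd [:0,1:] * w - 1" using inv_mod_pow[OF irr nX] by blast
    have "P dvd P ^ \<nu>" using nu by (simp add: dvd_power)
    hence Pw: "P dvd [:0,1:] * w - 1" using w by (rule dvd_trans)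
    define u where "u = w * (c - a^2)"
    have e1: "u - b^2 = w * (c - (a^2 + [:0,1:] * b^2)) + ([:0,1:] * w - 1) * b^2"
      unfolding u_def by (simp add: algebra_simps)
    have "P dvd w * (c - (a^2 + [:0,1:] * b^2))" by (rule dvd_mult[OF ab])
    moreover have "P dvd ([:0,1:] * w - 1) * b^2" by (rule dvd_mult2[OF Pw])
    ultimately have "P dvd u - b^2" unfolding e1 by (rule dvd_add)
    then obtain B where B: "P ^ \<nu> dvd u - B^2" using hensel_sq[OF irr two _ nb nu] by blast
    have e2: "c - (a^2 + [:0,1:] * B^2) = [:0,1:] * (u - B^2) - ([:0,1:] * w - 1) * (c - a^2)"
      unfolding u_def by (simp add: algebra_simps)
    have "P ^ \<nu> dvd [:0,1:] * (u - B^2)" by (rule dvd_mult[OF B])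
    moreover have "P ^ \<nu> dvd ([:0,1:] * w - 1) * (c - a^2)" by (rule dvd_mult2[OF w])
    ultimately have "P ^ \<nu> dvd c - (a^2 + [:0,1:] * B^2)" unfolding e2 by (rule dvd_diff)
    thus ?thesis by blast
  qed
qed

lemma mult_set:
  fixes P :: "'a::field poly"
  assumes dP: "degree P > 0" and nu: "\<nu> \<ge> 1"
  shows "{f \<in> Dn (degree P * \<nu>). P dvd f} = (\<lambda>g. P * g) ` Dn (degree P * (\<nu> - 1))"
proof (intro equalityI subsetI)
  have Pnz: "P \<noteq> 0" using dP by auto
  fix f assume "f \<in> {f \<in> Dn (degree P * \<nu>). P dvd f}"
  then obtain g where f: "f \<in> Dn (degree P * \<nu>)" "f = P * g" by blast
  have "g \<in> Dn (degree P * (\<nu> - 1))"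
  proof (cases "g = 0")
    case False
    have "degree f = degree P + degree g" unfolding f(2) by (rule degree_mult_eq[OF Pnz False])
    moreover have "degree f < degree P * \<nu>" using f False Pnz by (auto simp: Dn_iff)
    ultimately have "degree g < degree P * (\<nu> - 1)" using nu by (cases \<nu>) auto
    thus ?thesis by (simp add: Dn_iff)
  qed (simp add: Dn_iff)
  thus "f \<in> (\<lambda>g. P * g) ` Dn (degree P * (\<nu> - 1))" using f(2) by blast
next
  have Pnz: "P \<noteq> 0" using dP by auto
  fix f assume "f \<in> (\<lambda>g. P * g) ` Dn (degree P * (\<nu> - 1))"
  then obtain g where g: "g \<in> Dn (degree P * (\<nu> - 1))" "f = P * g" by blast
  have "f \<in> Dn (degree P * \<nu>)"
  proof (cases "g = 0")
    case False
    have "degree f = degree P + degree g" unfolding g(2) by (rule degree_mult_eq[OF Pnz False])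
    moreover have "degree g < degree P * (\<nu> - 1)" using g False by (simp add: Dn_iff)
    ultimately have "degree f < degree P * \<nu>" using nu by (cases \<nu>) auto
    thus ?thesis by (simp add: Dn_iff)
  qed (simp add: g Dn_iff)
  thus "f \<in> {f \<in> Dn (degree P * \<nu>). P dvd f}" using g by simp
qed

lemma card_units:
  fixes P :: "'a::{field,finite} poly"
  assumes dP: "degree P > 0" and nu: "\<nu> \<ge> 1"
  shows "card {f \<in> Dn (degree P * \<nu>). \<not> P dvd f} = CARD('a) ^ (degree P * \<nu>) - CARD('a) ^ (degree P * (\<nu> - 1))"
proof -
  have Pnz: "P \<noteq> 0" using dP by auto
  define M where "M = {f \<in> Dn (degree P * \<nu>). P dvd f}"
  have fin: "finite (Dn (degree P * \<nu>) :: 'a poly set)" using card_Dn by blast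
  have inj: "inj_on (\<lambda>g. P * g) Z" for Z using Pnz by (auto intro!: inj_onI)
  have cM: "card M = CARD('a) ^ (degree P * (\<nu> - 1))"
    unfolding M_def mult_set[OF dP nu] using card_image[OF inj] card_Dn by metis
  have "{f \<in> Dn (degree P * \<nu>). \<not> P dvd f} = Dn (degree P * \<nu>) - M" unfolding M_def by auto
  moreover have "M \<subseteq> Dn (degree P * \<nu>)" unfolding M_def by auto
  ultimately show ?thesis using card_Diff_subset[of M] fin cM card_Dn finite_subset
    by (metis (no_types, lifting))
qed

lemma decomp_minus:
  fixes P :: "'a::{field,finite} poly"
  assumes qodd: "odd CARD('a)" and irr: "irreducible P" and dP: "degree P > 0"
    and P0: "poly P 0 \<noteq> 0" and all: "\<forall>c. \<exists>a b. P dvd c - (a^2 + [:0,1:] * b^2)"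
    and ns: "\<not> (\<exists>s. P dvd s^2 + [:0,1:])" and nu: "\<nu> \<ge> 1"
  shows "Aq P \<nu> = {f \<in> Dn (degree P * \<nu>). \<not> P dvd f} \<union> (\<lambda>g. P^2 * g) ` Aq P (\<nu> - 2)"
proof (intro equalityI subsetI)
  have Pnz: "P \<noteq> 0" using dP by auto
  fix f assume fA: "f \<in> Aq P \<nu>"
  show "f \<in> {f \<in> Dn (degree P * \<nu>). \<not> P dvd f} \<union> (\<lambda>g. P^2 * g) ` Aq P (\<nu> - 2)"
  proof (cases "P dvd f")
    case False thus ?thesis using Aq_sub[OF Pnz] fA by auto
  next
    case True
    obtain A B where f: "f = (A^2 + [:0,1:] * B^2) mod P ^ \<nu>" using fA unfolding Aq_def by blast
    have "P dvd P ^ \<nu>" using nu by (simp add: dvd_power)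
    hence "P dvd A^2 + [:0,1:] * B^2" using True f dvd_mod_iff by metis
    then obtain A1 B1 where AB: "A = P * A1" "B = P * B1" using minus_N1[OF irr ns] by (meson dvdE)
    define h where "h = A1^2 + [:0,1:] * B1^2"
    have hh: "A^2 + [:0,1:] * B^2 = P^2 * h" unfolding AB h_def by (simp add: algebra_simps power2_eq_square)
    show ?thesis
    proof (cases "\<nu> = 1")
      case True
      have "f = 0" unfolding f hh True by simp
      hence "f = P^2 * 0" by simp
      moreover have "0 \<in> Aq P (\<nu> - 2)" by (rule zero_in_Aq)
      ultimately show ?thesis by blast
    next
      case False
      then obtain k where k: "\<nu> = Suc (Suc k)" using nu by (metis Suc_diff_Suc diff_is_0_eq' le_eq_less_or_eq numeral_2_eq_2 one_add_one plus_1_eq_Suc nat_neq_iff less_Suc_eq_0_disj not0_implies_Suc)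
      have "f = (P^2 * h) mod (P^2 * P^k)" unfolding f hh k by (simp add: power_add[symmetric] algebra_simps)
      also have "\<dots> = P^2 * (h mod P^k)" by (rule mult_mod_right[symmetric])
      finally have "f = P^2 * (h mod P^k)" .
      moreover have "h mod P^k \<in> Aq P (\<nu> - 2)" unfolding k h_def Aq_def by auto
      ultimately show ?thesis by blast
    qed
  qed
next
  have Pnz: "P \<noteq> 0" using dP by auto
  fix f assume "f \<in> {f \<in> Dn (degree P * \<nu>). \<not> P dvd f} \<union> (\<lambda>g. P^2 * g) ` Aq P (\<nu> - 2)"
  thus "f \<in> Aq P \<nu>"
  proof
    assume "f \<in> {f \<in> Dn (degree P * \<nu>). \<not> P dvd f}"
    hence f: "f \<in> Dn (degree P * \<nu>)" "\<not> P dvd f" by auto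
    obtain A B where "P ^ \<nu> dvd f - (A^2 + [:0,1:] * B^2)" using minus_R3[OF qodd irr dP P0 all f(2) nu] by blast
    thus ?thesis by (rule Aq_mem[OF Pnz f(1)])
  next
    assume "f \<in> (\<lambda>g. P^2 * g) ` Aq P (\<nu> - 2)"
    then obtain g where g: "g \<in> Aq P (\<nu> - 2)" "f = P^2 * g" by blast
    obtain A B where gAB: "g = (A^2 + [:0,1:] * B^2) mod P ^ (\<nu> - 2)" using g(1) unfolding Aq_def by blast
    show ?thesis
    proof (cases "\<nu> = 1")
      case True
      hence "g = 0" using gAB by simp
      thus ?thesis using g(2) zero_in_Aq by simp
    next
      case False
      then obtain k where k: "\<nu> = Suc (Suc k)" using nu by (metis Suc_diff_Suc diff_is_0_eq' le_eq_less_or_eq numeral_2_eq_2 one_add_one plus_1_eq_Suc nat_neq_iff less_Suc_eq_0_disj not0_implies_Suc)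
      have "f = P^2 * ((A^2 + [:0,1:] * B^2) mod P^k)" using g(2) gAB k by simp
      also have "\<dots> = (P^2 * (A^2 + [:0,1:] * B^2)) mod (P^2 * P^k)" by (rule mult_mod_right)
      also have "P^2 * (A^2 + [:0,1:] * B^2) = (P * A)^2 + [:0,1:] * (P * B)^2"
        by (simp add: algebra_simps power2_eq_square)
      also have "P^2 * P^k = P ^ \<nu>" unfolding k by (simp add: power_add[symmetric])
      finally show ?thesis unfolding Aq_def by blast
    qed
  qed
qed

lemma card_minus:
  fixes P :: "'a::{field,finite} poly"
  assumes qodd: "odd CARD('a)" and irr: "irreducible P" and dP: "degree P > 0"
    and P0: "poly P 0 \<noteq> 0" and all: "\<forall>c. \<exists>a b. P dvd c - (a^2 + [:0,1:] * b^2)"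
    and ns: "\<not> (\<exists>s. P dvd s^2 + [:0,1:])" and nu: "\<nu> \<ge> 1"
  shows "card (Aq P \<nu>) = (CARD('a) ^ (degree P * \<nu>) - CARD('a) ^ (degree P * (\<nu> - 1))) + card (Aq P (\<nu> - 2))"
proof -
  have Pnz: "P \<noteq> 0" using dP by auto
  have finA: "finite (Aq P k)" for k using Aq_sub[OF Pnz, of k] card_Dn finite_subset by blast
  have inj: "inj_on (\<lambda>g. P^2 * g) Z" for Z using Pnz by (auto intro!: inj_onI)
  have dis: "{f \<in> Dn (degree P * \<nu>). \<not> P dvd f} \<inter> (\<lambda>g. P^2 * g) ` Aq P (\<nu> - 2) = {}"
    by (auto simp: power2_eq_square)
  have "finite (Dn (degree P * \<nu>) :: 'a poly set)" using card_Dn by blast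
  hence finU: "finite {f \<in> Dn (degree P * \<nu>). \<not> P dvd f}" by (rule finite_subset[rotated]) auto
  show ?thesis
    unfolding decomp_minus[OF qodd irr dP P0 all ns nu]
    using card_Un_disjoint[OF finU finite_imageI[OF finA] dis] card_image[OF inj] card_units[OF dP nu]
    by simp
qed


lemma P_is_X:
  fixes P :: "'a::field poly"
  assumes mon: "lead_coeff P = 1" and irr: "irreducible P" and P0: "poly P 0 = 0"
  shows "P = [:0,1:]"
proof -
  have XP: "[:0,1:] dvd P" using P0 poly_eq_0_iff_dvd[of P 0] by simp
  have "\<not> is_unit ([:0,1:] :: 'a poly)" using is_unit_iff_degree[of "[:0,1::'a:]"] by simp
  hence PX: "P dvd [:0,1:]" using irreducibleD'[OF irr XP] by blast
  obtain j where j: "P = [:0,1:] * j" using XP by blast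
  have Pnz: "P \<noteq> 0" using mon by auto
  hence j0: "j \<noteq> 0" using j by auto
  have "degree P \<le> 1" using dvd_imp_degree_le[OF PX] by simp
  moreover have "degree P = 1 + degree j" unfolding j by (subst degree_mult_eq) (use j0 in auto)
  ultimately have "degree j = 0" by simp
  then obtain c where c: "j = [:c:]" by (metis degree_eq_zeroE)
  have "lead_coeff P = c" unfolding j c by (simp add: lead_coeff_mult)
  hence "c = 1" using mon by simp
  thus ?thesis using j c by (simp add: one_pCons)
qed

lemma fermA:
  fixes x :: "'a::{field,finite}"
  assumes "x \<noteq> 0"
  shows "x ^ (CARD('a) - 1) = 1"
proof -
  have q2: "CARD('a) \<ge> 2"
  proof -
    have "card {0::'a, 1} \<le> CARD('a)" by (rule card_mono) auto
    thus ?thesis by simp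
  qed
  have "x ^ CARD('a) = x" by (rule ff_pow_card)
  hence "x ^ (CARD('a) - 1) * x = 1 * x" using q2 by (metis Suc_diff_1 less_le_trans power_Suc2 pos2 mult_1)
  thus ?thesis using assms by simp
qed

lemma card_sq:
  assumes "odd CARD('a::{field,finite})"
  shows "card {c::'a. c \<noteq> 0 \<and> (\<exists>x. x^2 = c)} = (CARD('a) - 1) div 2"
proof -
  have q2: "CARD('a) \<ge> 2"
  proof -
    have "card {0::'a, 1} \<le> CARD('a)" by (rule card_mono) auto
    thus ?thesis by simp
  qed
  have q3: "CARD('a) \<ge> 3" using q2 assms by presburger
  have "{c::'a. c \<noteq> 0 \<and> (\<exists>x. x^2 = c)} = (\<lambda>y. y^2) ` (UNIV - {0})" by auto
  moreover have "card ((\<lambda>y. y^2) ` (UNIV - {0::'a})) = (CARD('a) - 1) div 2"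
    using euler_gen(2)[of "UNIV::'a set" "CARD('a) - 1"] fermA assms q3 by auto
  ultimately show ?thesis by simp
qed

lemma poly_mod_Xpow: "poly (g mod [:0,1:] ^ Suc n) 0 = poly (g::'a::field poly) 0"
proof -
  have "g = (g div [:0,1:] ^ Suc n) * [:0,1:] ^ Suc n + g mod [:0,1:] ^ Suc n" by (rule div_mult_mod_eq[symmetric])
  hence "poly g 0 = poly (g div [:0,1:] ^ Suc n) 0 * poly ([:0,1:] ^ Suc n) 0 + poly (g mod [:0,1:] ^ Suc n) 0"
    by (metis poly_add poly_mult)
  thus ?thesis by simp
qed

definition SS :: "nat \<Rightarrow> 'a::field poly set" where
  "SS m = {f \<in> Dn m. poly f 0 \<noteq> 0 \<and> (\<exists>x. x^2 = poly f 0)}"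

lemma decomp_X:
  fixes Xp :: "'a::{field,finite} poly"
  assumes qodd: "odd CARD('a)" and Xp: "Xp = [:0,1:]"
  shows "Aq Xp (Suc n) = SS (Suc n) \<union> (\<lambda>g. Xp * g) ` Aq Xp n"
proof (intro equalityI subsetI)
  have Xnz: "Xp \<noteq> 0" and dX: "degree Xp = 1" using Xp by auto
  have two: "(2::'a) \<noteq> 0" by (rule two_ne_zero_ff[OF qodd])
  fix f assume fA: "f \<in> Aq Xp (Suc n)"
  obtain A B where f: "f = (A^2 + [:0,1:] * B^2) mod Xp ^ Suc n" using fA unfolding Aq_def by blast
  have pf: "poly f 0 = (poly A 0)^2" unfolding f Xp poly_mod_Xpow by simp
  have fD: "f \<in> Dn (Suc n)" using Aq_sub[OF Xnz, of "Suc n"] fA dX by auto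
  show "f \<in> SS (Suc n) \<union> (\<lambda>g. Xp * g) ` Aq Xp n"
  proof (cases "poly A 0 = 0")
    case False
    hence "f \<in> SS (Suc n)" unfolding SS_def using fD pf by auto
    thus ?thesis by blast
  next
    case True
    hence "[:0,1:] dvd A" using poly_eq_0_iff_dvd[of A 0] by simp
    then obtain A1 where A1: "A = [:0,1:] * A1" by blast
    define h where "h = B^2 + [:0,1:] * A1^2"
    have "A^2 + [:0,1:] * B^2 = Xp * h" unfolding A1 h_def Xp by (simp add: algebra_simps power2_eq_square)
    hence "f = (Xp * h) mod (Xp * Xp ^ n)" unfolding f by simp
    also have "\<dots> = Xp * (h mod Xp ^ n)" by (rule mult_mod_right[symmetric])
    finally have "f = Xp * (h mod Xp ^ n)" .
    moreover have "h mod Xp ^ n \<in> Aq Xp n" unfolding h_def Aq_def Xp by auto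
    ultimately show ?thesis by blast
  qed
next
  have Xnz: "Xp \<noteq> 0" and dX: "degree Xp = 1" using Xp by auto
  have two: "(2::'a) \<noteq> 0" by (rule two_ne_zero_ff[OF qodd])
  fix f assume "f \<in> SS (Suc n) \<union> (\<lambda>g. Xp * g) ` Aq Xp n"
  thus "f \<in> Aq Xp (Suc n)"
  proof
    assume "f \<in> SS (Suc n)"
    then obtain x where fD: "f \<in> Dn (Suc n)" and x: "x^2 = poly f 0" "poly f 0 \<noteq> 0"
      unfolding SS_def by auto
    have "poly (f - [:x:]^2) 0 = 0" using x by simp
    hence d1: "Xp dvd f - [:x:]^2" using poly_eq_0_iff_dvd[of "f - [:x:]^2" 0] Xp by simp
    have "poly [:x:] 0 \<noteq> 0" using x by auto
    hence d2: "\<not> Xp dvd [:x:]" using poly_eq_0_iff_dvd[of "[:x:]" 0] Xp by simp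
    obtain A where A: "Xp ^ Suc n dvd f - A^2" using hensel_sq[OF _ two d1 d2, of "Suc n"] irr_X Xp by auto
    have "Xp ^ Suc n dvd f - (A^2 + [:0,1:] * 0^2)" using A by simp
    moreover have "f \<in> Dn (degree Xp * Suc n)" using fD dX by simp
    ultimately show ?thesis using Aq_mem[OF Xnz] by blast
  next
    assume "f \<in> (\<lambda>g. Xp * g) ` Aq Xp n"
    then obtain g where g: "g \<in> Aq Xp n" "f = Xp * g" by blast
    obtain A B where gAB: "g = (A^2 + [:0,1:] * B^2) mod Xp ^ n" using g(1) unfolding Aq_def by blast
    have "f = Xp * ((A^2 + [:0,1:] * B^2) mod Xp ^ n)" using g(2) gAB by simp
    also have "\<dots> = (Xp * (A^2 + [:0,1:] * B^2)) mod (Xp * Xp ^ n)" by (rule mult_mod_right)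
    also have "Xp * (A^2 + [:0,1:] * B^2) = (Xp * B)^2 + [:0,1:] * A^2"
      unfolding Xp by (simp add: algebra_simps power2_eq_square)
    also have "Xp * Xp ^ n = Xp ^ Suc n" by simp
    finally show ?thesis unfolding Aq_def by blast
  qed
qed

lemma card_SS:
  assumes qodd: "odd CARD('a::{field,finite})"
  shows "card (SS (Suc n) :: 'a poly set) = (CARD('a) - 1) div 2 * CARD('a) ^ n"
proof -
  define SQa where "SQa = {c::'a. c \<noteq> 0 \<and> (\<exists>x. x^2 = c)}"
  have "SS (Suc n) = pc ` (SQa \<times> (Dn n :: 'a poly set))"
  proof (intro equalityI subsetI)
    fix f :: "'a poly" assume "f \<in> SS (Suc n)"
    hence f: "f \<in> Dn (Suc n)" "poly f 0 \<noteq> 0" "\<exists>x. x^2 = poly f 0" unfolding SS_def by auto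
    then obtain z where z: "z \<in> (UNIV :: 'a set) \<times> Dn n" "f = pc z" unfolding Dn_Suc by blast
    have "fst z \<in> SQa" using f z by (simp add: SQa_def poly_pc_0)
    hence "z \<in> SQa \<times> Dn n" using z by (cases z) auto
    thus "f \<in> pc ` (SQa \<times> Dn n)" using z by blast
  next
    fix f :: "'a poly" assume "f \<in> pc ` (SQa \<times> Dn n)"
    then obtain z where z: "z \<in> SQa \<times> Dn n" "f = pc z" by blast
    have "f \<in> Dn (Suc n)" unfolding Dn_Suc using z by auto
    moreover have "poly f 0 = fst z" using z by (simp add: poly_pc_0)
    ultimately show "f \<in> SS (Suc n)" using z unfolding SS_def SQa_def by auto
  qed
  hence "card (SS (Suc n) :: 'a poly set) = card (SQa \<times> (Dn n :: 'a poly set))"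
    using card_image[OF inj_pc] by metis
  also have "\<dots> = card SQa * card (Dn n :: 'a poly set)" by (rule card_cartesian_product)
  also have "\<dots> = (CARD('a) - 1) div 2 * CARD('a) ^ n"
    using card_sq[OF qodd] card_Dn[of n, where 'a='a] by (simp add: SQa_def)
  finally show ?thesis .
qed

lemma card_X:
  fixes Xp :: "'a::{field,finite} poly"
  assumes qodd: "odd CARD('a)" and Xp: "Xp = [:0,1:]"
  shows "2 * card (Aq Xp n) = CARD('a) ^ n + 1"
proof (induction n)
  case 0 thus ?case by (simp add: Aq_0)
next
  case (Suc n)
  have Xnz: "Xp \<noteq> 0" and dX: "degree Xp = 1" using Xp by auto
  have finA: "finite (Aq Xp k)" for k using Aq_sub[OF Xnz, of k] card_Dn finite_subset by blast
  have finS: "finite (SS (Suc n) :: 'a poly set)"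
  proof -
    have "finite (Dn (Suc n) :: 'a poly set)" using card_Dn by blast
    thus ?thesis unfolding SS_def by (rule finite_subset[rotated]) auto
  qed
  have inj: "inj_on (\<lambda>g. Xp * g) Z" for Z using Xnz by (auto intro!: inj_onI)
  have dis: "SS (Suc n) \<inter> (\<lambda>g. Xp * g) ` Aq Xp n = {}" unfolding SS_def Xp by auto
  have "card (Aq Xp (Suc n)) = card (SS (Suc n) :: 'a poly set) + card (Aq Xp n)"
    unfolding decomp_X[OF qodd Xp]
    using card_Un_disjoint[OF finS finite_imageI[OF finA] dis] card_image[OF inj] by simp
  hence "2 * card (Aq Xp (Suc n)) = 2 * ((CARD('a) - 1) div 2) * CARD('a) ^ n + (CARD('a) ^ n + 1)"
    using card_SS[OF qodd, of n] Suc by (simp add: algebra_simps)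
  also have "2 * ((CARD('a) - 1) div 2) = CARD('a) - 1" using qodd by simp
  also have "(CARD('a) - 1) * CARD('a) ^ n + (CARD('a) ^ n + 1) = CARD('a) ^ Suc n + 1"
  proof -
    have "CARD('a) \<ge> 1" by (simp add: Suc_leI)
    then obtain m where "CARD('a) = Suc m" by (cases "CARD('a)") auto
    thus ?thesis by simp
  qed
  finally show ?case .
qed


lemma minus_closed:
  fixes c :: "nat \<Rightarrow> nat" and Q :: nat
  assumes c0: "c 0 = 1" and Q1: "Q \<ge> 1"
    and rec: "\<And>k. k \<ge> 1 \<Longrightarrow> c k = (Q ^ k - Q ^ (k - 1)) + c (k - 2)"
  shows "(real Q + 1) * real (c n) = real Q ^ (n + 1) + (if odd n then real Q else 1)"
proof (induction n rule: less_induct)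
  case (less n)
  show ?case
  proof (cases "n = 0")
    case True thus ?thesis using c0 by simp
  next
    case False
    hence n1: "n \<ge> 1" by simp
    have le: "Q ^ (n - 1) \<le> Q ^ n" using Q1 by (simp add: power_increasing)
    have cr: "real (c n) = real Q ^ n - real Q ^ (n - 1) + real (c (n - 2))"
      using rec[OF n1] le by (simp add: of_nat_diff)
    obtain m where m: "n = Suc m" using n1 by (cases n) auto
    show ?thesis
    proof (cases "n = 1")
      case True
      have "c (n - 2) = 1" using True c0 by simp
      thus ?thesis using cr True by (simp add: algebra_simps power2_eq_square)
    next
      case False
      then obtain k where k: "n = Suc (Suc k)" using m by (cases m) auto
      have IH: "(real Q + 1) * real (c k) = real Q ^ (k + 1) + (if odd k then real Q else 1)"
        using less.IH[of k] k by simp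
      have cr': "real (c n) = real Q ^ n - real Q ^ (n - 1) + real (c k)" using cr k by simp
      have e1: "(real Q + 1) * real (c n) = (real Q + 1) * (real Q ^ n - real Q ^ (n - 1)) + (real Q + 1) * real (c k)"
        unfolding cr' by (simp only: distrib_left)
      have e2: "(real Q + 1) * (real Q ^ n - real Q ^ (n - 1)) = real Q ^ (n + 1) - real Q ^ (k + 1)"
        unfolding k by (simp add: algebra_simps)
      have "(real Q + 1) * real (c n) = real Q ^ (n + 1) - real Q ^ (k + 1) + (real Q ^ (k + 1) + (if odd k then real Q else 1))"
        unfolding e1 e2 IH ..
      thus ?thesis using k by simp
    qed
  qed
qed

theorem mainTheorem9:
  fixes P :: "'a::{field,finite} poly" and \<nu> :: nat
  assumes "odd CARD('a)"
    and "lead_coeff P = 1" and "irreducible P"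
    and "\<nu> \<ge> 1"
  shows "(chiq P = -1 \<longrightarrow>
            real (card (Aq P \<nu>)) =
              (if odd \<nu>
               then real (pnorm P) ^ \<nu> * (1 - 1 / (real (pnorm P) + 1)) + real (pnorm P) / (real (pnorm P) + 1)
               else real (pnorm P) ^ \<nu> * (1 - 1 / (real (pnorm P) + 1)) + 1 / (real (pnorm P) + 1)))
       \<and> (chiq P = 0 \<longrightarrow> real (card (Aq P \<nu>)) = (real (pnorm P) ^ \<nu> + 1) / 2)
       \<and> (chiq P = 1 \<longrightarrow> real (card (Aq P \<nu>)) = real (pnorm P) ^ \<nu>)"
proof -
  note qodd = assms(1) and mon = assms(2) and irr = assms(3) and nu = assms(4)
  have Pnz: "P \<noteq> 0" using mon by auto
  have dP: "degree P > 0"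
  proof (rule ccontr)
    assume "\<not> degree P > 0"
    hence "is_unit P" using is_unit_iff_degree[OF Pnz] by simp
    thus False using irr irreducible_not_unit by blast
  qed
  define Q where "Q = pnorm P"
  have QP: "Q = CARD('a) ^ degree P" by (simp add: Q_def pnorm_def)
  have Qpow: "CARD('a) ^ (degree P * k) = Q ^ k" for k by (simp add: QP power_mult)
  have Q1: "Q \<ge> 1" unfolding QP by (simp add: Suc_leI)
  have part_m: "chiq P = -1 \<longrightarrow> real (card (Aq P \<nu>)) =
              (if odd \<nu>
               then real Q ^ \<nu> * (1 - 1 / (real Q + 1)) + real Q / (real Q + 1)
               else real Q ^ \<nu> * (1 - 1 / (real Q + 1)) + 1 / (real Q + 1))"
  proof
    assume "chiq P = -1"
    hence P0: "poly P 0 \<noteq> 0" and nsq: "\<not> (\<exists>x. x^2 = poly P 0)"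
      unfolding chiq_def by (auto split: if_splits)
    have ff: "((\<exists>s. P dvd s^2 + [:0,1:]) \<longleftrightarrow> (\<exists>x. x^2 = poly P 0))
              \<and> (\<forall>c. \<exists>a b. P dvd c - (a^2 + [:0,1:] * b^2))"
      by (rule field_facts[OF qodd mon irr P0])
    hence ns: "\<not> (\<exists>s. P dvd s^2 + [:0,1:])" and all: "\<forall>c. \<exists>a b. P dvd c - (a^2 + [:0,1:] * b^2)"
      using nsq by auto
    define c where "c = (\<lambda>k. card (Aq P k))"
    have c0: "c 0 = 1" by (simp add: c_def Aq_0)
    have rec: "c k = (Q ^ k - Q ^ (k - 1)) + c (k - 2)" if "k \<ge> 1" for k
      using card_minus[OF qodd irr dP P0 all ns that] unfolding c_def Qpow .
    have cl: "(real Q + 1) * real (c \<nu>) = real Q ^ (\<nu> + 1) + (if odd \<nu> then real Q else 1)"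
      by (rule minus_closed[OF c0 Q1 rec])
    have Qp: "real Q + 1 > 0" by simp
    have "real (c \<nu>) = (real Q ^ (\<nu> + 1) + (if odd \<nu> then real Q else 1)) / (real Q + 1)"
      using cl Qp by (simp add: field_simps)
    thus "real (card (Aq P \<nu>)) =
              (if odd \<nu>
               then real Q ^ \<nu> * (1 - 1 / (real Q + 1)) + real Q / (real Q + 1)
               else real Q ^ \<nu> * (1 - 1 / (real Q + 1)) + 1 / (real Q + 1))"
    proof -
      have h1: "1 - 1 / (real Q + 1) = real Q / (real Q + 1)" using Qp by (simp add: field_simps)
      have h2: "real Q ^ \<nu> * (real Q / (real Q + 1)) = real Q ^ (\<nu> + 1) / (real Q + 1)"
        by (simp add: mult.commute)
      have h3: "real (c \<nu>) = real Q ^ (\<nu> + 1) / (real Q + 1) + (if odd \<nu> then real Q else 1) / (real Q + 1)"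
        using \<open>real (c \<nu>) = _\<close> by (simp add: add_divide_distrib)
      show ?thesis unfolding h1 h2 using h3 unfolding c_def by simp
    qed
  qed
  have part_0: "chiq P = 0 \<longrightarrow> real (card (Aq P \<nu>)) = (real Q ^ \<nu> + 1) / 2"
  proof
    assume "chiq P = 0"
    hence P0: "poly P 0 = 0" unfolding chiq_def by (auto split: if_splits)
    have PX: "P = [:0,1:]" by (rule P_is_X[OF mon irr P0])
    have "Q = CARD('a)" unfolding QP PX by simp
    moreover have "2 * card (Aq P \<nu>) = CARD('a) ^ \<nu> + 1" by (rule card_X[OF qodd PX])
    ultimately have "2 * real (card (Aq P \<nu>)) = real Q ^ \<nu> + 1" by (metis of_nat_1 of_nat_add of_nat_mult of_nat_numeral of_nat_power)
    thus "real (card (Aq P \<nu>)) = (real Q ^ \<nu> + 1) / 2" by simp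
  qed
  have part_p: "chiq P = 1 \<longrightarrow> real (card (Aq P \<nu>)) = real Q ^ \<nu>"
  proof
    assume "chiq P = 1"
    hence P0: "poly P 0 \<noteq> 0" and sq: "\<exists>x. x^2 = poly P 0"
      unfolding chiq_def by (auto split: if_splits)
    have "\<exists>s. P dvd s^2 + [:0,1:]" using field_facts[OF qodd mon irr P0] sq by blast
    hence "Aq P \<nu> = Dn (degree P * \<nu>)" by (rule case_plus[OF qodd irr dP P0 _ nu])
    hence "card (Aq P \<nu>) = Q ^ \<nu>" using card_Dn[of "degree P * \<nu>", where 'a='a] Qpow by simp
    thus "real (card (Aq P \<nu>)) = real Q ^ \<nu>" by simp
  qed
  show ?thesis using part_m part_0 part_p unfolding Q_def by blast
qed


end
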